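(* Let $\mathcal H$ be a separable Hilbert space and $\mathcal K$ a Hilbert space of finite dimension $d$ with orthonormal basis $\{|n\rangle\}_{n=1}^d$. A channel $\mathcal F\in\mathcal C(\mathcal K;\mathcal H)$ lies on the boundary $\partial\mathcal C(\mathcal K;\mathcal H)$ if and only if its Choi operator $$E(\mathcal F)=d\sum_{m,n=1}^d|m\rangle\langle n|\otimes\mathcal F(|m\rangle\langle n|)\in\mathcal L(\mathcal K\otimes\mathcal H)$$ has $0$ in its spectrum.
   Context: $\mathcal C(\mathcal K;\mathcal H)$ denotes the convex set of normal unital completely positive linear maps $\mathcal L(\mathcal K)\to\mathcal L(\mathcal H)$ (channels in the Heisenberg picture). For elements of a convex set $Z$, $x\leq_C y$ means $y=tx+(1-t)z$ for some $z\in Z$ and $0<t\leq 1$; the boundary $\partial Z$ is the set of $y\in Z$ for which some $x\in Z$ has $x\not\leq_C y$. *)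

theory Defs
  imports "HOL-Analysis.Analysis" "HOL-Library.Complex_Order"
begin

class complex_hilbert = real_normed_vector + complete_space +
  fixes scaleC :: "complex \<Rightarrow> 'a \<Rightarrow> 'a" (infixr \<open>*\<^sub>C\<close> 75)
    and cinner :: "'a \<Rightarrow> 'a \<Rightarrow> complex"
  assumes scaleC_add_right: "a *\<^sub>C (x + y) = a *\<^sub>C x + a *\<^sub>C y"
    and scaleC_add_left: "(a + b) *\<^sub>C x = a *\<^sub>C x + b *\<^sub>C x"
    and scaleC_scaleC: "a *\<^sub>C (b *\<^sub>C x) = (a * b) *\<^sub>C x"
    and scaleC_one: "1 *\<^sub>C x = x"
    and scaleR_scaleC: "r *\<^sub>R x = complex_of_real r *\<^sub>C x"
    and cinner_commute: "cinner y x = cnj (cinner x y)"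
    and cinner_add_right: "cinner x (y + z) = cinner x y + cinner x z"
    and cinner_scaleC_right: "cinner x (a *\<^sub>C y) = a * cinner x y"
    and cinner_ge_zero: "0 \<le> Re (cinner x x)"
    and cinner_eq_zero_iff: "cinner x x = 0 \<longleftrightarrow> x = 0"
    and norm_eq_sqrt_cinner: "norm x = sqrt (Re (cinner x x))"

instantiation complex :: complex_hilbert
begin
definition scaleC_complex :: "complex \<Rightarrow> complex \<Rightarrow> complex" where
  "scaleC_complex a x = a * x"
definition cinner_complex :: "complex \<Rightarrow> complex \<Rightarrow> complex" where
  "cinner_complex x y = cnj x * y"
instance
proof
  fix x y z a b :: complex and r :: real
  show "a *\<^sub>C (x + y) = a *\<^sub>C x + a *\<^sub>C y" by (simp add: scaleC_complex_def algebra_simps)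
  show "(a + b) *\<^sub>C x = a *\<^sub>C x + b *\<^sub>C x" by (simp add: scaleC_complex_def algebra_simps)
  show "a *\<^sub>C (b *\<^sub>C x) = (a * b) *\<^sub>C x" by (simp add: scaleC_complex_def algebra_simps)
  show "1 *\<^sub>C x = x" by (simp add: scaleC_complex_def)
  show "r *\<^sub>R x = complex_of_real r *\<^sub>C x" by (simp add: scaleC_complex_def scaleR_conv_of_real)
  show "cinner y x = cnj (cinner x y)" by (simp add: cinner_complex_def mult.commute)
  show "cinner x (y + z) = cinner x y + cinner x z" by (simp add: cinner_complex_def algebra_simps)
  show "cinner x (a *\<^sub>C y) = a * cinner x y" by (simp add: cinner_complex_def scaleC_complex_def algebra_simps)
  show "0 \<le> Re (cinner x x)" by (simp add: cinner_complex_def)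
  show "(cinner x x = 0) = (x = 0)" by (simp add: cinner_complex_def)
  show "norm x = sqrt (Re (cinner x x))"
    by (simp add: cinner_complex_def cmod_def power2_eq_square)
qed
end

text \<open>Finite orthogonal direct sums \<open>'a^'n\<close> (this models \<open>\<complex>^d \<otimes> H \<cong> H^d\<close>,
and \<open>complex^'n\<close> models \<open>\<complex>^d\<close>); the norm of \<open>vec\<close> is already the \<open>\<ell>\<^sup>2\<close> norm.\<close>

instantiation vec :: (complex_hilbert, finite) complex_hilbert
begin
definition scaleC_vec :: "complex \<Rightarrow> 'a^'b \<Rightarrow> 'a^'b" where
  "scaleC_vec a x = (\<chi> i. a *\<^sub>C (x $ i))"
definition cinner_vec :: "'a^'b \<Rightarrow> 'a^'b \<Rightarrow> complex" where
  "cinner_vec x y = (\<Sum>i\<in>UNIV. cinner (x $ i) (y $ i))"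
instance
proof
  fix x y z :: "'a^'b" and a b :: complex and r :: real
  show "a *\<^sub>C (x + y) = a *\<^sub>C x + a *\<^sub>C y"
    by (simp add: scaleC_vec_def vec_eq_iff scaleC_add_right)
  show "(a + b) *\<^sub>C x = a *\<^sub>C x + b *\<^sub>C x"
    by (simp add: scaleC_vec_def vec_eq_iff scaleC_add_left)
  show "a *\<^sub>C (b *\<^sub>C x) = (a * b) *\<^sub>C x"
    by (simp add: scaleC_vec_def vec_eq_iff scaleC_scaleC)
  show "1 *\<^sub>C x = x" by (simp add: scaleC_vec_def vec_eq_iff scaleC_one)
  show "r *\<^sub>R x = complex_of_real r *\<^sub>C x"
    by (simp add: scaleC_vec_def vec_eq_iff scaleR_scaleC)
  show "cinner y x = cnj (cinner x y)"
    by (simp add: cinner_vec_def cinner_commute[of "y $ i" "x $ i" for i])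
  show "cinner x (y + z) = cinner x y + cinner x z"
    by (simp add: cinner_vec_def cinner_add_right sum.distrib)
  show "cinner x (a *\<^sub>C y) = a * cinner x y"
    by (simp add: cinner_vec_def scaleC_vec_def cinner_scaleC_right sum_distrib_left)
  show "0 \<le> Re (cinner x x)"
    by (simp add: cinner_vec_def sum_nonneg cinner_ge_zero)
  have re: "Re (cinner x x) = (\<Sum>i\<in>UNIV. (norm (x $ i))\<^sup>2)"
    by (simp add: cinner_vec_def norm_eq_sqrt_cinner cinner_ge_zero)
  show "norm x = sqrt (Re (cinner x x))"
    by (simp add: re norm_vec_def L2_set_def)
  have im: "Im (cinner (x $ i) (x $ i)) = 0" for i
    using cinner_commute[of "x $ i" "x $ i"] by (metis cnj.simps(2) neg_equal_zero)
  show "(cinner x x = 0) = (x = 0)"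
  proof
    assume "cinner x x = 0"
    then have "(\<Sum>i\<in>UNIV. (norm (x $ i))\<^sup>2) = 0" using re by simp
    then have "\<forall>i. (norm (x $ i))\<^sup>2 = 0" by (simp add: sum_nonneg_eq_0_iff)
    then show "x = 0" by (simp add: vec_eq_iff)
  next
    assume "x = 0"
    then show "cinner x x = 0"
      by (simp add: cinner_vec_def cinner_eq_zero_iff)
  qed
qed
end

definition bounded_op :: "('a::complex_hilbert \<Rightarrow> 'b::complex_hilbert) \<Rightarrow> bool" where
  "bounded_op T \<longleftrightarrow> bounded_linear T \<and> (\<forall>c x. T (c *\<^sub>C x) = c *\<^sub>C T x)"

definition op_spectrum :: "('a::complex_hilbert \<Rightarrow> 'a) \<Rightarrow> complex set" where
  "op_spectrum T = {z. \<not> (\<exists>S. bounded_op S \<and>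
       (\<forall>x. S (T x - z *\<^sub>C x) = x) \<and> (\<forall>x. T (S x) - z *\<^sub>C S x = x))}"

text \<open>Complete positivity: for every \<open>k\<close>, \<open>id\<^sub>k \<otimes> F\<close> maps positive block matrices
\<open>[M\<^sub>i\<^sub>j]\<^sub>i\<^sub>,\<^sub>j\<^sub><\<^sub>k\<close> over \<open>\<L>(\<K>)\<close> to positive block operators \<open>[F(M\<^sub>i\<^sub>j)]\<close> on \<open>\<H>^k\<close>.\<close>

definition completely_positive ::
    "(complex^'n^'n \<Rightarrow> 'a::complex_hilbert \<Rightarrow> 'a) \<Rightarrow> bool" where
  "completely_positive F \<longleftrightarrow>
     (\<forall>(k::nat) (M :: nat \<Rightarrow> nat \<Rightarrow> complex^'n^'n).
        (\<forall>v :: nat \<Rightarrow> complex^'n.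
            0 \<le> (\<Sum>i<k. \<Sum>j<k. cinner (v i) (M i j *v v j))) \<longrightarrow>
        (\<forall>h :: nat \<Rightarrow> 'a.
            0 \<le> (\<Sum>i<k. \<Sum>j<k. cinner (h i) (F (M i j) (h j)))))"

text \<open>Channels in the Heisenberg picture: linear, bounded-operator valued, unital,
completely positive maps. (Normality is automatic since \<open>\<L>(\<K>)\<close> is finite dimensional.)\<close>

definition channels :: "(complex^'n^'n \<Rightarrow> 'a::complex_hilbert \<Rightarrow> 'a) set" where
  "channels = {F.
      (\<forall>A B. F (A + B) = (\<lambda>x. F A x + F B x)) \<and>
      (\<forall>c A. F (c *\<^sub>C A) = (\<lambda>x. c *\<^sub>C F A x)) \<and>
      (\<forall>A. bounded_op (F A)) \<and>
      F (mat 1) = (\<lambda>x. x) \<and>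
      completely_positive F}"

definition chan_comb :: "real \<Rightarrow> (complex^'n^'n \<Rightarrow> 'a::complex_hilbert \<Rightarrow> 'a)
     \<Rightarrow> (complex^'n^'n \<Rightarrow> 'a \<Rightarrow> 'a) \<Rightarrow> (complex^'n^'n \<Rightarrow> 'a \<Rightarrow> 'a)" where
  "chan_comb t F G = (\<lambda>A x. complex_of_real t *\<^sub>C F A x + complex_of_real (1 - t) *\<^sub>C G A x)"

definition conv_le :: "(complex^'n^'n \<Rightarrow> 'a::complex_hilbert \<Rightarrow> 'a) set
     \<Rightarrow> (complex^'n^'n \<Rightarrow> 'a \<Rightarrow> 'a) \<Rightarrow> (complex^'n^'n \<Rightarrow> 'a \<Rightarrow> 'a) \<Rightarrow> bool" where
  "conv_le Z x y \<longleftrightarrow> (\<exists>z\<in>Z. \<exists>t::real. 0 < t \<and> t \<le> 1 \<and> y = chan_comb t x z)"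

definition conv_boundary :: "(complex^'n^'n \<Rightarrow> 'a::complex_hilbert \<Rightarrow> 'a) set
     \<Rightarrow> (complex^'n^'n \<Rightarrow> 'a \<Rightarrow> 'a) set" where
  "conv_boundary Z = {y \<in> Z. \<exists>x\<in>Z. \<not> conv_le Z x y}"

definition ket_bra :: "'n::finite \<Rightarrow> 'n \<Rightarrow> complex^'n^'n" where
  "ket_bra m n = (\<chi> i j. if i = m \<and> j = n then 1 else 0)"

text \<open>\<open>E(F) = d \<Sum>\<^sub>m\<^sub>,\<^sub>n |m\<rangle>\<langle>n| \<otimes> F(|m\<rangle>\<langle>n|)\<close> acting on \<open>\<K> \<otimes> \<H> \<cong> \<H>^d\<close>,
where \<open>x \<in> \<H>^d\<close> corresponds to \<open>\<Sum>\<^sub>n |n\<rangle> \<otimes> x\<^sub>n\<close>.\<close>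
definition choi :: "(complex^'n^'n \<Rightarrow> 'a::complex_hilbert \<Rightarrow> 'a) \<Rightarrow> 'a^'n \<Rightarrow> 'a^'n" where
  "choi F x = (\<chi> m. complex_of_nat CARD('n) *\<^sub>C (\<Sum>n\<in>UNIV. F (ket_bra m n) (x $ n)))"

end

theory Submission
  imports Defs
begin


context complex_hilbert begin

lemma scaleC_zero_left [simp]: "0 *\<^sub>C x = 0"
proof -
  have "0 *\<^sub>C x = 0 *\<^sub>C x + 0 *\<^sub>C x" using scaleC_add_left[of 0 0 x] by simp
  then show ?thesis by simp
qed

lemma scaleC_zero_right [simp]: "a *\<^sub>C 0 = 0"
proof -
  have "a *\<^sub>C 0 = a *\<^sub>C 0 + a *\<^sub>C 0" using scaleC_add_right[of a 0 0] by simp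
  then show ?thesis by simp
qed

lemma scaleC_minus_left: "(- a) *\<^sub>C x = - (a *\<^sub>C x)"
  using scaleC_add_left[of a "-a" x] by (simp add: minus_unique)

lemma scaleC_minus_right: "a *\<^sub>C (- x) = - (a *\<^sub>C x)"
  using scaleC_add_right[of a x "-x"] by (simp add: minus_unique)

lemma scaleC_diff_right: "a *\<^sub>C (x - y) = a *\<^sub>C x - a *\<^sub>C y"
  using scaleC_add_right[of a x "-y"] by (simp add: scaleC_minus_right)

lemma scaleC_diff_left: "(a - b) *\<^sub>C x = a *\<^sub>C x - b *\<^sub>C x"
  using scaleC_add_left[of a "-b" x] by (simp add: scaleC_minus_left)

lemma scaleC_sum_right: "a *\<^sub>C (\<Sum>i\<in>I. f i) = (\<Sum>i\<in>I. a *\<^sub>C f i)"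
  by (induction I rule: infinite_finite_induct) (auto simp: scaleC_add_right)

lemma scaleC_sum_left: "(\<Sum>i\<in>I. f i) *\<^sub>C x = (\<Sum>i\<in>I. f i *\<^sub>C x)"
  by (induction I rule: infinite_finite_induct) (auto simp: scaleC_add_left)

lemma scaleC_of_real: "complex_of_real r *\<^sub>C x = r *\<^sub>R x"
  by (simp add: scaleR_scaleC)

lemma cinner_add_left: "cinner (x + y) z = cinner x z + cinner y z"
proof -
  have "cinner (x + y) z = cnj (cinner z (x + y))" by (rule cinner_commute)
  also have "\<dots> = cnj (cinner z x) + cnj (cinner z y)" by (simp add: cinner_add_right)
  also have "\<dots> = cinner x z + cinner y z" by (simp add: cinner_commute[of x z] cinner_commute[of y z])
  finally show ?thesis .
qed

lemma cinner_scaleC_left: "cinner (a *\<^sub>C x) y = cnj a * cinner x y"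
proof -
  have "cinner (a *\<^sub>C x) y = cnj (cinner y (a *\<^sub>C x))" by (rule cinner_commute)
  also have "\<dots> = cnj a * cnj (cinner y x)" by (simp add: cinner_scaleC_right)
  also have "\<dots> = cnj a * cinner x y" by (simp add: cinner_commute[of x y])
  finally show ?thesis .
qed

lemma cinner_zero_left [simp]: "cinner 0 y = 0"
  using cinner_add_left[of 0 0 y] by simp

lemma cinner_zero_right [simp]: "cinner x 0 = 0"
  using cinner_add_right[of x 0 0] by simp

lemma cinner_minus_left: "cinner (- x) y = - cinner x y"
proof -
  have "cinner x y + cinner (-x) y = 0" using cinner_add_left[of x "-x" y] by simp
  then show ?thesis by (simp add: complex_eq_iff)
qed

lemma cinner_minus_right: "cinner x (- y) = - cinner x y"
proof -
  have "cinner x y + cinner x (-y) = 0" using cinner_add_right[of x y "-y"] by simp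
  then show ?thesis by (simp add: complex_eq_iff)
qed

lemma cinner_diff_left: "cinner (x - y) z = cinner x z - cinner y z"
  using cinner_add_left[of x "-y" z] by (simp add: cinner_minus_left)

lemma cinner_diff_right: "cinner x (y - z) = cinner x y - cinner x z"
  using cinner_add_right[of x y "-z"] by (simp add: cinner_minus_right)

lemma cinner_sum_right: "cinner x (\<Sum>i\<in>I. f i) = (\<Sum>i\<in>I. cinner x (f i))"
  by (induction I rule: infinite_finite_induct) (auto simp: cinner_add_right)

lemma cinner_sum_left: "cinner (\<Sum>i\<in>I. f i) y = (\<Sum>i\<in>I. cinner (f i) y)"
  by (induction I rule: infinite_finite_induct) (auto simp: cinner_add_left)

lemma Im_cinner_self [simp]: "Im (cinner x x) = 0"
  using cinner_commute[of x x] by (metis cnj.simps(2) neg_equal_zero)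

lemma cinner_self: "cinner x x = complex_of_real ((norm x)\<^sup>2)"
  using norm_eq_sqrt_cinner[of x] cinner_ge_zero[of x]
  by (simp add: complex_eq_iff)

lemma Re_cinner_self: "Re (cinner x x) = (norm x)\<^sup>2"
  by (simp add: cinner_self)

lemma norm_scaleC: "norm (a *\<^sub>C x) = cmod a * norm x"
proof -
  have "(norm (a *\<^sub>C x))\<^sup>2 = Re (cnj a * a * cinner x x)"
    by (simp add: Re_cinner_self[symmetric] cinner_scaleC_left cinner_scaleC_right mult.assoc)
  also have "cnj a * a = complex_of_real ((cmod a)\<^sup>2)"
    by (metis complex_norm_square mult.commute of_real_power)
  also have "Re (complex_of_real ((cmod a)\<^sup>2) * cinner x x) = (cmod a * norm x)\<^sup>2"
    by (simp add: cinner_self power_mult_distrib)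
  finally show ?thesis by (simp add: power2_eq_iff_nonneg)
qed

lemma Re_cinner_le_half: "Re (cinner x y) \<le> ((norm x)\<^sup>2 + (norm y)\<^sup>2) / 2"
proof -
  have "0 \<le> Re (cinner (x - y) (x - y))" by (rule cinner_ge_zero)
  also have "Re (cinner (x - y) (x - y)) = (norm x)\<^sup>2 + (norm y)\<^sup>2 - Re (cinner x y) - Re (cinner y x)"
    by (simp add: cinner_diff_left cinner_diff_right Re_cinner_self)
  also have "Re (cinner y x) = Re (cinner x y)" by (subst cinner_commute) simp
  finally show ?thesis by simp
qed

lemma Re_cinner_le: "Re (cinner x y) \<le> norm x * norm y"
proof (cases "x = 0 \<or> y = 0")
  case True then show ?thesis by auto
next
  case False
  then have nx: "norm x > 0" and ny: "norm y > 0" by auto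
  define u where "u = complex_of_real (1 / norm x) *\<^sub>C x"
  define v where "v = complex_of_real (1 / norm y) *\<^sub>C y"
  have nu: "norm u = 1" using nx by (simp add: u_def norm_scaleC norm_divide)
  have nv: "norm v = 1" using ny by (simp add: v_def norm_scaleC norm_divide)
  have "Re (cinner u v) = Re (cinner x y) / (norm x * norm y)"
    by (simp add: u_def v_def cinner_scaleC_left cinner_scaleC_right)
  moreover have "Re (cinner u v) \<le> 1" using Re_cinner_le_half[of u v] nu nv by simp
  ultimately show ?thesis using nx ny by (simp add: divide_le_eq)
qed

lemma Re_cinner_ge: "- (norm x * norm y) \<le> Re (cinner x y)"
  using Re_cinner_le[of "-x" y] by (simp add: cinner_minus_left)

end

lemma scaleC_scaleR_comm: "a *\<^sub>C (r *\<^sub>R x) = r *\<^sub>R (a *\<^sub>C x)"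
  by (simp add: scaleR_scaleC scaleC_scaleC mult.commute)

lemma linear_scaleC: "linear (\<lambda>x::'a::complex_hilbert. a *\<^sub>C x)"
  by (rule linearI) (simp_all add: scaleC_add_right scaleC_scaleR_comm)

lemma bounded_linear_scaleC: "bounded_linear (\<lambda>x::'a::complex_hilbert. a *\<^sub>C x)"
proof -
  interpret linear "\<lambda>x::'a. a *\<^sub>C x" by (rule linear_scaleC)
  show ?thesis
  proof (rule bounded_linear_intro[where K="cmod a"])
    fix x y :: 'a and r :: real
    show "a *\<^sub>C (x + y) = a *\<^sub>C x + a *\<^sub>C y" by (rule scaleC_add_right)
    show "a *\<^sub>C (r *\<^sub>R x) = r *\<^sub>R (a *\<^sub>C x)" by (rule scaleC_scaleR_comm)
    show "norm (a *\<^sub>C x) \<le> norm x * cmod a" by (simp add: norm_scaleC mult.commute)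
  qed
qed


definition cform :: "'p set \<Rightarrow> ('p \<Rightarrow> 'p \<Rightarrow> complex) \<Rightarrow> ('p \<Rightarrow> complex) \<Rightarrow> complex" where
  "cform P M v = (\<Sum>p\<in>P. \<Sum>q\<in>P. cnj (v p) * M p q * v q)"

definition psd :: "'p set \<Rightarrow> ('p \<Rightarrow> 'p \<Rightarrow> complex) \<Rightarrow> bool" where
  "psd P M \<longleftrightarrow> (\<forall>v. 0 \<le> cform P M v)"

lemma cform_support:
  assumes "finite P" "S \<subseteq> P" "\<forall>x\<in>P - S. v x = 0"
  shows "cform P M v = cform S M v"
proof -
  have "cform P M v = (\<Sum>p\<in>S. \<Sum>q\<in>P. cnj (v p) * M p q * v q)"
    unfolding cform_def by (rule sum.mono_neutral_right) (use assms in auto)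
  also have "\<dots> = cform S M v"
    unfolding cform_def
    by (rule sum.cong[OF refl], rule sum.mono_neutral_right) (use assms in auto)
  finally show ?thesis .
qed

lemma cform_two:
  assumes "finite P" "p \<in> P" "q \<in> P" "p \<noteq> q"
  shows "cform P M (\<lambda>x. if x = p then a else if x = q then b else 0) =
     cnj a * M p p * a + cnj a * M p q * b + cnj b * M q p * a + cnj b * M q q * b"
proof -
  have "cform P M (\<lambda>x. if x = p then a else if x = q then b else 0) =
        cform {p,q} M (\<lambda>x. if x = p then a else if x = q then b else 0)"
    by (rule cform_support) (use assms in auto)
  also have "\<dots> = cnj a * M p p * a + cnj a * M p q * b + cnj b * M q p * a + cnj b * M q q * b"
    using assms by (simp add: cform_def)
  finally show ?thesis .
qed

lemma cform_one:
  assumes "finite P" "p \<in> P"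
  shows "cform P M (\<lambda>x. if x = p then a else 0) = cnj a * M p p * a"
proof -
  have "cform P M (\<lambda>x. if x = p then a else 0) = cform {p} M (\<lambda>x. if x = p then a else 0)"
    by (rule cform_support) (use assms in auto)
  also have "\<dots> = cnj a * M p p * a" by (simp add: cform_def)
  finally show ?thesis .
qed

lemma psd_diag:
  assumes "psd P M" "finite P" "p \<in> P"
  shows "0 \<le> M p p"
proof -
  have "0 \<le> cform P M (\<lambda>x. if x = p then 1 else 0)" using assms(1) unfolding psd_def by blast
  then show ?thesis by (simp add: cform_one[OF assms(2,3)])
qed

lemma psd_diag_real:
  assumes "psd P M" "finite P" "p \<in> P"
  shows "M p p = complex_of_real (Re (M p p))" "Re (M p p) \<ge> 0"
  using psd_diag[OF assms] by (auto simp: less_eq_complex_def complex_eq_iff)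

lemma psd_herm:
  assumes "psd P M" "finite P" "p \<in> P" "q \<in> P"
  shows "M q p = cnj (M p q)"
proof (cases "p = q")
  case True
  have "Im (M p p) = 0" using psd_diag[OF assms(1,2,3)] by (simp add: less_eq_complex_def)
  then show ?thesis using True by (simp add: complex_eq_iff)
next
  case False
  have d1: "Im (M p p) = 0" "Im (M q q) = 0"
    using psd_diag[OF assms(1,2,3)] psd_diag[OF assms(1,2,4)] by (auto simp: less_eq_complex_def)
  have "0 \<le> cform P M (\<lambda>x. if x = p then 1 else if x = q then 1 else 0)"
    using assms(1) unfolding psd_def by blast
  then have i1: "Im (M p q) + Im (M q p) = 0"
    using cform_two[OF assms(2,3,4) False, of M 1 1] d1 by (simp add: less_eq_complex_def)
  have "0 \<le> cform P M (\<lambda>x. if x = p then 1 else if x = q then \<i> else 0)"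
    using assms(1) unfolding psd_def by blast
  then have i2: "Re (M p q) - Re (M q p) = 0"
    using cform_two[OF assms(2,3,4) False, of M 1 \<i>] d1 by (simp add: less_eq_complex_def)
  show ?thesis using i1 i2 by (simp add: complex_eq_iff)
qed

lemma psd_zero_row:
  assumes "psd P M" "finite P" "p \<in> P" "q \<in> P" "M p p = 0"
  shows "M p q = 0"
proof (rule ccontr)
  assume c0: "M p q \<noteq> 0"
  then have pq: "p \<noteq> q" using assms(5) by auto
  define c where "c = M p q"
  have h: "M q p = cnj c" using psd_herm[OF assms(1,2,3,4)] c_def by simp
  define n where "n = Re (cnj c * c)"
  have n: "n = (cmod c)\<^sup>2" unfolding n_def
    using cmod_power2[of c] by (simp add: power2_eq_square)
  have npos: "n > 0" using c0 c_def n by simp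
  define s where "s = (Re (M q q) + 1) / (2 * n)"
  define a where "a = - (complex_of_real s * c)"
  have "0 \<le> cform P M (\<lambda>x. if x = p then a else if x = q then 1 else 0)"
    using assms(1) unfolding psd_def by blast
  then have "0 \<le> Re (cnj a * c + cnj c * a + M q q)"
    using cform_two[OF assms(2,3,4) pq, of M a 1] assms(5) h c_def
    by (simp add: less_eq_complex_def mult.commute)
  also have "Re (cnj a * c + cnj c * a + M q q) = - 2 * s * n + Re (M q q)"
    unfolding a_def n_def by (simp add: algebra_simps)
  also have "\<dots> = -1" using npos unfolding s_def by (simp add: field_simps)
  finally show False by simp
qed

lemma psd_restrict:
  assumes "psd (insert p0 P) M" "finite P" "p0 \<notin> P"
  shows "psd P M"
  unfolding psd_def
proof
  fix v
  have "0 \<le> cform (insert p0 P) M (v(p0 := 0))" using assms unfolding psd_def by blast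
  also have "cform (insert p0 P) M (v(p0 := 0)) = cform (P - {p0}) M (v(p0 := 0))"
    by (rule cform_support) (use assms in auto)
  also have "\<dots> = cform (P - {p0}) M v"
    unfolding cform_def by (rule sum.cong[OF refl], rule sum.cong) auto
  also have "\<dots> = cform P M v"
    by (rule cform_support[symmetric]) (use assms in auto)
  finally show "0 \<le> cform P M v" .
qed


lemma sumlist_upd_other:
  assumes "p \<noteq> p0" "q \<noteq> p0"
  shows "(\<Sum>w\<leftarrow>map (\<lambda>w. w(p0 := 0)) ws. w p * cnj (w q)) = (\<Sum>w\<leftarrow>ws. w p * cnj (w q))"
  using assms by (induction ws) auto

lemma sumlist_upd_same:
  assumes "p = p0 \<or> q = p0"
  shows "(\<Sum>w\<leftarrow>map (\<lambda>w. w(p0 := (0::complex))) ws. w p * cnj (w q)) = 0"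
  using assms by (induction ws) auto

lemma psd_schur_step:
  assumes psdQ: "psd (insert p0 P) M" and fin: "finite P" and notin: "p0 \<notin> P"
    and R: "M p0 p0 = complex_of_real r" and rpos: "r > 0"
  shows "psd P (\<lambda>p q. M p q - M p p0 * M p0 q / complex_of_real r)"
  unfolding psd_def
proof
  fix v :: "'a \<Rightarrow> complex"
  define R where "R = complex_of_real r"
  have Rnz: "R \<noteq> 0" using rpos R_def by simp
  have cR: "cnj R = R" unfolding R_def by simp
  define \<beta> where "\<beta> = (\<Sum>q\<in>P. M p0 q * v q)"
  define \<gamma> where "\<gamma> = (\<Sum>p\<in>P. cnj (v p) * M p p0)"
  have finQ: "finite (insert p0 P)" using fin by simp
  have \<gamma>: "\<gamma> = cnj \<beta>"
  proof -
    have "\<gamma> = (\<Sum>p\<in>P. cnj (M p0 p * v p))"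
      unfolding \<gamma>_def
    proof (rule sum.cong[OF refl])
      fix p assume "p \<in> P"
      then have "M p p0 = cnj (M p0 p)" using psd_herm[OF psdQ finQ, of p0 p] by simp
      then show "cnj (v p) * M p p0 = cnj (M p0 p * v p)" by (simp add: mult.commute)
    qed
    also have "\<dots> = cnj \<beta>" unfolding \<beta>_def by (simp add: cnj_sum)
    finally show ?thesis .
  qed
  define \<alpha> where "\<alpha> = - \<beta> / R"
  define u where "u = v(p0 := \<alpha>)"
  have uP: "\<And>p. p \<in> P \<Longrightarrow> u p = v p" using notin unfolding u_def by auto
  have up0: "u p0 = \<alpha>" unfolding u_def by simp
  have "cform (insert p0 P) M u =
      (\<Sum>q\<in>insert p0 P. cnj (u p0) * M p0 q * u q) + (\<Sum>p\<in>P. \<Sum>q\<in>insert p0 P. cnj (u p) * M p q * u q)"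
    unfolding cform_def using fin notin by simp
  also have "(\<Sum>q\<in>insert p0 P. cnj (u p0) * M p0 q * u q) = cnj \<alpha> * R * \<alpha> + cnj \<alpha> * \<beta>"
    using fin notin by (simp add: up0 uP R R_def \<beta>_def sum_distrib_left mult.assoc)
  also have "(\<Sum>p\<in>P. \<Sum>q\<in>insert p0 P. cnj (u p) * M p q * u q) =
       (\<Sum>p\<in>P. cnj (v p) * M p p0 * \<alpha> + (\<Sum>q\<in>P. cnj (v p) * M p q * v q))"
    using fin notin by (intro sum.cong refl) (simp add: up0 uP)
  also have "\<dots> = \<gamma> * \<alpha> + cform P M v"
    unfolding \<gamma>_def cform_def by (simp add: sum.distrib sum_distrib_right)
  finally have e1: "cform (insert p0 P) M u = cnj \<alpha> * R * \<alpha> + cnj \<alpha> * \<beta> + \<gamma> * \<alpha> + cform P M v"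
    by simp
  have "cform P (\<lambda>p q. M p q - M p p0 * M p0 q / complex_of_real r) v =
        cform P M v - (\<Sum>p\<in>P. \<Sum>q\<in>P. (cnj (v p) * M p p0) * (M p0 q * v q)) / R"
    unfolding cform_def R_def
    by (simp add: sum_subtractf sum_divide_distrib algebra_simps)
  also have "(\<Sum>p\<in>P. \<Sum>q\<in>P. (cnj (v p) * M p p0) * (M p0 q * v q)) = \<gamma> * \<beta>"
    unfolding \<gamma>_def \<beta>_def by (simp add: sum_product)
  finally have e2: "cform P (\<lambda>p q. M p q - M p p0 * M p0 q / complex_of_real r) v = cform P M v - \<gamma> * \<beta> / R" .
  have eqn: "cnj \<alpha> * R * \<alpha> + cnj \<alpha> * \<beta> + \<gamma> * \<alpha> = - \<gamma> * \<beta> / R"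
    unfolding \<alpha>_def \<gamma> using Rnz cR by (simp add: field_simps)
  have e3: "cform (insert p0 P) M u = - \<gamma> * \<beta> / R + cform P M v"
    using e1 unfolding eqn .
  have "cform (insert p0 P) M u = cform P (\<lambda>p q. M p q - M p p0 * M p0 q / complex_of_real r) v"
    unfolding e3 e2 by simp
  moreover have "0 \<le> cform (insert p0 P) M u" using psdQ unfolding psd_def by blast
  ultimately show "0 \<le> cform P (\<lambda>p q. M p q - M p p0 * M p0 q / complex_of_real r) v" by simp
qed

lemma psd_decomp:
  assumes "finite P" "psd P M"
  shows "\<exists>ws. \<forall>p\<in>P. \<forall>q\<in>P. M p q = (\<Sum>w\<leftarrow>ws. w p * cnj (w q))"
  using assms
proof (induction P arbitrary: M rule: finite_induct)
  case empty
  then show ?case by auto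
next
  case (insert p0 P M)
  have finQ: "finite (insert p0 P)" using insert.hyps by simp
  have psdQ: "psd (insert p0 P) M" by fact
  define r where "r = Re (M p0 p0)"
  have Mr: "M p0 p0 = complex_of_real r" and r0: "r \<ge> 0"
    using psd_diag_real[OF psdQ finQ, of p0] unfolding r_def by auto
  show ?case
  proof (cases "r = 0")
    case True
    have row: "M p0 q = 0" if "q \<in> insert p0 P" for q
      using psd_zero_row[OF psdQ finQ _ that] Mr True by simp
    have col: "M q p0 = 0" if "q \<in> insert p0 P" for q
      using psd_herm[OF psdQ finQ _ that, of p0] row[OF that] by simp
    have "psd P M" using psd_restrict[OF psdQ insert.hyps(1,2)] .
    then obtain ws where ws: "\<forall>p\<in>P. \<forall>q\<in>P. M p q = (\<Sum>w\<leftarrow>ws. w p * cnj (w q))"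
      using insert.IH by blast
    show ?thesis
    proof (intro exI ballI)
      fix p q assume p: "p \<in> insert p0 P" and q: "q \<in> insert p0 P"
      show "M p q = (\<Sum>w\<leftarrow>map (\<lambda>w. w(p0 := 0)) ws. w p * cnj (w q))"
      proof (cases "p = p0 \<or> q = p0")
        case True
        have "(\<Sum>w\<leftarrow>map (\<lambda>w. w(p0 := 0)) ws. w p * cnj (w q)) = 0"
          by (rule sumlist_upd_same[OF True])
        moreover have "M p q = 0" using True row[OF q] col[OF p] by auto
        ultimately show ?thesis by simp
      next
        case False
        have e: "(\<Sum>w\<leftarrow>map (\<lambda>w. w(p0 := 0)) ws. w p * cnj (w q)) = (\<Sum>w\<leftarrow>ws. w p * cnj (w q))"
          using False by (intro sumlist_upd_other) auto
        show ?thesis unfolding e using p q ws False by simp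
      qed
    qed
  next
    case False
    then have rpos: "r > 0" using r0 by simp
    define M' where "M' = (\<lambda>p q. M p q - M p p0 * M p0 q / complex_of_real r)"
    have "psd P M'" unfolding M'_def
      by (rule psd_schur_step[OF psdQ insert.hyps(1,2) Mr rpos])
    then obtain ws where ws: "\<forall>p\<in>P. \<forall>q\<in>P. M' p q = (\<Sum>w\<leftarrow>ws. w p * cnj (w q))"
      using insert.IH by blast
    define S where "S = complex_of_real (sqrt r)"
    have SS: "S * S = complex_of_real r" unfolding S_def using r0
      by (simp del: of_real_mult add: of_real_mult[symmetric])
    have cS: "cnj S = S" unfolding S_def by simp
    have Snz: "S \<noteq> 0" unfolding S_def using rpos by simp
    define w0 where "w0 = (\<lambda>p. M p p0 / S)"
    have w0prod: "w0 p * cnj (w0 q) = M p p0 * M p0 q / complex_of_real r"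
      if "q \<in> insert p0 P" for p q
    proof -
      have "cnj (M q p0) = M p0 q" using psd_herm[OF psdQ finQ that, of p0] by simp
      moreover have "w0 p * cnj (w0 q) = M p p0 * cnj (M q p0) / (S * S)"
        unfolding w0_def using cS by simp
      ultimately show ?thesis unfolding SS by simp
    qed
    show ?thesis
    proof (intro exI ballI)
      fix p q assume p: "p \<in> insert p0 P" and q: "q \<in> insert p0 P"
      show "M p q = (\<Sum>w\<leftarrow>w0 # map (\<lambda>w. w(p0 := 0)) ws. w p * cnj (w q))"
      proof (cases "p = p0 \<or> q = p0")
        case True
        have "M p q = M p p0 * M p0 q / complex_of_real r"
        proof (cases "p = p0")
          case True then show ?thesis using Mr rpos by simp
        next
          case False then have "q = p0" using \<open>p = p0 \<or> q = p0\<close> by simp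
          then show ?thesis using Mr rpos by simp
        qed
        moreover have "(\<Sum>w\<leftarrow>map (\<lambda>w. w(p0 := 0)) ws. w p * cnj (w q)) = 0"
          by (rule sumlist_upd_same[OF True])
        ultimately show ?thesis using w0prod[OF q] by (simp only: list.map sum_list_simps) simp
      next
        case False
        then have pP: "p \<in> P" and qP: "q \<in> P" using p q by auto
        have "M p q = M' p q + M p p0 * M p0 q / complex_of_real r" unfolding M'_def by simp
        moreover have e: "(\<Sum>w\<leftarrow>map (\<lambda>w. w(p0 := 0)) ws. w p * cnj (w q)) = (\<Sum>w\<leftarrow>ws. w p * cnj (w q))"
          using False by (intro sumlist_upd_other) auto
        moreover have "M' p q = (\<Sum>w\<leftarrow>ws. w p * cnj (w q))" using ws pP qP by blast
        ultimately show ?thesis using w0prod[OF q] by (simp only: list.map sum_list_simps) simp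
      qed
    qed
  qed
qed


lemma cinner_vec_sum: "cinner (x::'a::complex_hilbert^'n) y = (\<Sum>i\<in>UNIV. cinner (x$i) (y$i))"
  by (simp add: cinner_vec_def)

lemma scaleC_vec_nth [simp]: "(c *\<^sub>C x) $ i = c *\<^sub>C (x $ i)"
  by (simp add: scaleC_vec_def)

lemma cinner_complex_eq [simp]: "cinner (x::complex) y = cnj x * y"
  by (simp add: cinner_complex_def)

lemma scaleC_complex_eq [simp]: "c *\<^sub>C (x::complex) = c * x"
  by (simp add: scaleC_complex_def)

lemma ket_bra_nth [simp]: "ket_bra a b $ i $ j = (if i = a \<and> j = b then 1 else 0)"
  by (simp add: ket_bra_def)

lemma mat_expand: "(A::complex^'n^'n) = (\<Sum>a\<in>UNIV. \<Sum>b\<in>UNIV. (A$a$b) *\<^sub>C ket_bra a b)"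
proof -
  have "(\<Sum>a\<in>UNIV. \<Sum>b\<in>UNIV. (A$a$b) *\<^sub>C ket_bra a b) $ i $ j = A $ i $ j" for i j
  proof -
    have "(\<Sum>a\<in>UNIV. \<Sum>b\<in>UNIV. (A$a$b) *\<^sub>C ket_bra a b) $ i $ j
        = (\<Sum>a\<in>UNIV. \<Sum>b\<in>UNIV. A$a$b * (if i = a \<and> j = b then 1 else 0))"
      by simp
    also have "\<dots> = (\<Sum>a\<in>UNIV. if a = i then A$a$j else 0)"
      by (rule sum.cong[OF refl]) (auto simp: if_distrib cong: if_cong)
    also have "\<dots> = A $ i $ j" by simp
    finally show ?thesis .
  qed
  then show ?thesis by (simp add: vec_eq_iff)
qed

lemma bop_sum:
  assumes "bounded_op T"
  shows "T (\<Sum>i\<in>I. f i) = (\<Sum>i\<in>I. T (f i))"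
proof -
  have bl: "bounded_linear T" using assms by (simp add: bounded_op_def)
  show ?thesis using linear_sum[OF bounded_linear.linear[OF bl]] by simp
qed

lemma bop_scaleC:
  assumes "bounded_op T"
  shows "T (c *\<^sub>C x) = c *\<^sub>C T x"
  using assms by (simp add: bounded_op_def)

definition lin :: "(complex^'n^'n \<Rightarrow> 'a::complex_hilbert \<Rightarrow> 'a) \<Rightarrow> bool" where
  "lin F \<longleftrightarrow> (\<forall>A B. F (A + B) = (\<lambda>x. F A x + F B x)) \<and>
     (\<forall>c A. F (c *\<^sub>C A) = (\<lambda>x. c *\<^sub>C F A x)) \<and> (\<forall>A. bounded_op (F A))"

lemma lin_zero:
  fixes F :: "complex^'n^'n \<Rightarrow> 'a::complex_hilbert \<Rightarrow> 'a"
  assumes "lin F"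
  shows "F 0 x = 0"
proof -
  have "F (0 *\<^sub>C (0::complex^'n^'n)) = (\<lambda>x. 0 *\<^sub>C F 0 x)" using assms unfolding lin_def by blast
  then show ?thesis by (simp add: fun_eq_iff)
qed

lemma lin_sum:
  fixes F :: "complex^'n^'n \<Rightarrow> 'a::complex_hilbert \<Rightarrow> 'a"
  assumes "lin F"
  shows "F (\<Sum>i\<in>I. A i) x = (\<Sum>i\<in>I. F (A i) x)"
proof (induction I rule: infinite_finite_induct)
  case (infinite A) then show ?case using lin_zero[OF assms] by simp
next
  case empty then show ?case using lin_zero[OF assms] by simp
next
  case (insert i I)
  then show ?case using assms by (simp add: lin_def)
qed

lemma lin_scaleC:
  fixes F :: "complex^'n^'n \<Rightarrow> 'a::complex_hilbert \<Rightarrow> 'a"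
  assumes "lin F"
  shows "F (c *\<^sub>C A) x = c *\<^sub>C F A x"
  using assms by (simp add: lin_def)

lemma lin_expand:
  fixes F :: "complex^'n^'n \<Rightarrow> 'a::complex_hilbert \<Rightarrow> 'a"
  assumes "lin F"
  shows "F A x = (\<Sum>a\<in>UNIV. \<Sum>b\<in>UNIV. (A$a$b) *\<^sub>C F (ket_bra a b) x)"
proof -
  have "F A x = F (\<Sum>a\<in>UNIV. \<Sum>b\<in>UNIV. (A$a$b) *\<^sub>C ket_bra a b) x"
    by (subst mat_expand) simp
  also have "\<dots> = (\<Sum>a\<in>UNIV. \<Sum>b\<in>UNIV. (A$a$b) *\<^sub>C F (ket_bra a b) x)"
    by (simp add: lin_sum[OF assms] lin_scaleC[OF assms])
  finally show ?thesis .
qed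

lemma sum_prod_split: "(\<Sum>p\<in>A \<times> B. g p) = (\<Sum>i\<in>A. \<Sum>a\<in>B. g (i,a))"
  by (simp add: sum.cartesian_product)

lemma cform_prod:
  "cform (A \<times> B) N v = (\<Sum>i\<in>A. \<Sum>a\<in>B. \<Sum>j\<in>A. \<Sum>b\<in>B. cnj (v (i,a)) * N (i,a) (j,b) * v (j,b))"
  unfolding cform_def
  by (simp add: sum_prod_split)

lemma psd_pairing:
  assumes "finite P" "psd P N"
    and X: "\<forall>u. 0 \<le> (\<Sum>p\<in>P. \<Sum>q\<in>P. u p * X p q * cnj (u q))"
  shows "0 \<le> (\<Sum>p\<in>P. \<Sum>q\<in>P. N p q * X p q)"
proof -
  obtain ws where ws: "\<forall>p\<in>P. \<forall>q\<in>P. N p q = (\<Sum>w\<leftarrow>ws. w p * cnj (w q))"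
    using psd_decomp[OF assms(1,2)] by blast
  have "(\<Sum>p\<in>P. \<Sum>q\<in>P. N p q * X p q) = (\<Sum>p\<in>P. \<Sum>q\<in>P. (\<Sum>w\<leftarrow>ws. w p * cnj (w q)) * X p q)"
    using ws by (intro sum.cong refl) simp
  also have "\<dots> = (\<Sum>w\<leftarrow>ws. \<Sum>p\<in>P. \<Sum>q\<in>P. w p * X p q * cnj (w q))"
    by (induction ws) (simp_all add: algebra_simps sum.distrib)
  also have "0 \<le> \<dots>"
    by (rule sum_list_nonneg) (use X in auto)
  finally show ?thesis by simp
qed


lemma swap_mid: "(\<Sum>i\<in>I. \<Sum>a\<in>B. \<Sum>j\<in>J. g i a j) = (\<Sum>i\<in>I. \<Sum>j\<in>J. \<Sum>a\<in>B. g i a j)"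
  by (rule sum.cong[OF refl], rule sum.swap)

lemma complex_nonneg_scale:
  assumes "0 \<le> complex_of_real c * z" "c > 0"
  shows "0 \<le> z"
  using assms by (auto simp: less_eq_complex_def zero_le_mult_iff)

lemma choi_pos_cp:
  fixes F :: "complex^'n^'n \<Rightarrow> 'a::complex_hilbert \<Rightarrow> 'a"
  assumes lin: "lin F" and cpos: "\<forall>y. 0 \<le> cinner y (choi F y)"
  shows "completely_positive F"
  unfolding completely_positive_def
proof (intro allI impI)
  fix k :: nat and M :: "nat \<Rightarrow> nat \<Rightarrow> complex^'n^'n" and h :: "nat \<Rightarrow> 'a"
  assume Mpos: "\<forall>v :: nat \<Rightarrow> complex^'n. 0 \<le> (\<Sum>i<k. \<Sum>j<k. cinner (v i) (M i j *v v j))"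
  have bop: "\<And>A. bounded_op (F A)" using lin by (simp add: lin_def)
  define P where "P = {..<k} \<times> (UNIV :: 'n set)"
  define N where "N p q = M (fst p) (fst q) $ snd p $ snd q" for p q
  define X where "X p q = cinner (h (fst p)) (F (ket_bra (snd p) (snd q)) (h (fst q)))" for p q
  have finP: "finite P" unfolding P_def by simp
  have psdN: "psd P N"
    unfolding psd_def
  proof
    fix v :: "nat \<times> 'n \<Rightarrow> complex"
    define V where "V i = (\<chi> a. v (i,a))" for i
    have "cform P N v = (\<Sum>i<k. \<Sum>a\<in>UNIV. \<Sum>j<k. \<Sum>b\<in>UNIV. cnj (v (i,a)) * (M i j $ a $ b) * v (j,b))"
      unfolding P_def cform_prod N_def by simp
    also have "\<dots> = (\<Sum>i<k. \<Sum>j<k. \<Sum>a\<in>UNIV. \<Sum>b\<in>UNIV. cnj (v (i,a)) * (M i j $ a $ b) * v (j,b))"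
      by (rule swap_mid)
    also have "\<dots> = (\<Sum>i<k. \<Sum>j<k. cinner (V i) (M i j *v V j))"
      unfolding V_def by (simp add: cinner_vec_sum matrix_vector_mult_def sum_distrib_left mult.assoc)
    finally show "0 \<le> cform P N v" using Mpos by simp
  qed
  have pair: "(\<Sum>i<k. \<Sum>j<k. cinner (h i) (F (M i j) (h j))) = (\<Sum>p\<in>P. \<Sum>q\<in>P. N p q * X p q)"
  proof -
    have "(\<Sum>i<k. \<Sum>j<k. cinner (h i) (F (M i j) (h j))) =
        (\<Sum>i<k. \<Sum>j<k. \<Sum>a\<in>UNIV. \<Sum>b\<in>UNIV. (M i j $ a $ b) * cinner (h i) (F (ket_bra a b) (h j)))"
      by (simp add: lin_expand[OF lin, of "M _ _"] cinner_sum_right cinner_scaleC_right)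
    also have "\<dots> = (\<Sum>i<k. \<Sum>a\<in>UNIV. \<Sum>j<k. \<Sum>b\<in>UNIV. (M i j $ a $ b) * cinner (h i) (F (ket_bra a b) (h j)))"
      by (rule swap_mid[symmetric])
    also have "\<dots> = (\<Sum>p\<in>P. \<Sum>q\<in>P. N p q * X p q)"
      unfolding P_def N_def X_def by (simp add: sum_prod_split)
    finally show ?thesis .
  qed
  have Xcond: "\<forall>u. 0 \<le> (\<Sum>p\<in>P. \<Sum>q\<in>P. u p * X p q * cnj (u q))"
  proof
    fix u :: "nat \<times> 'n \<Rightarrow> complex"
    define y where "y = (\<chi> a. \<Sum>i<k. cnj (u (i,a)) *\<^sub>C h i)"
    define d where "d = complex_of_nat CARD('n)"
    define Z where "Z a b i j = u (i,a) * X (i,a) (j,b) * cnj (u (j,b))" for a b i j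
    have "cinner y (choi F y) = (\<Sum>a\<in>UNIV. cinner (y $ a) (d *\<^sub>C (\<Sum>b\<in>UNIV. F (ket_bra a b) (y $ b))))"
      unfolding choi_def d_def by (simp add: cinner_vec_sum)
    also have "\<dots> = d * (\<Sum>a\<in>UNIV. \<Sum>b\<in>UNIV. cinner (y $ a) (F (ket_bra a b) (y $ b)))"
      by (simp add: cinner_scaleC_right cinner_sum_right sum_distrib_left)
    also have "(\<Sum>a\<in>UNIV. \<Sum>b\<in>UNIV. cinner (y $ a) (F (ket_bra a b) (y $ b))) =
        (\<Sum>a\<in>UNIV. \<Sum>b\<in>UNIV. \<Sum>j<k. \<Sum>i<k. Z a b i j)"
      unfolding y_def Z_def X_def
      by (simp add: bop_sum[OF bop] bop_scaleC[OF bop] cinner_sum_right cinner_sum_left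
          cinner_scaleC_right cinner_scaleC_left sum_distrib_left algebra_simps)
    also have "\<dots> = (\<Sum>a\<in>UNIV. \<Sum>b\<in>UNIV. \<Sum>i<k. \<Sum>j<k. Z a b i j)"
      by (rule sum.cong[OF refl], rule sum.cong[OF refl], rule sum.swap)
    also have "\<dots> = (\<Sum>a\<in>UNIV. \<Sum>i<k. \<Sum>b\<in>UNIV. \<Sum>j<k. Z a b i j)"
      by (rule swap_mid)
    also have "\<dots> = (\<Sum>i<k. \<Sum>a\<in>UNIV. \<Sum>b\<in>UNIV. \<Sum>j<k. Z a b i j)"
      by (rule sum.swap)
    also have "\<dots> = (\<Sum>i<k. \<Sum>a\<in>UNIV. \<Sum>j<k. \<Sum>b\<in>UNIV. Z a b i j)"
      by (rule sum.cong[OF refl], rule swap_mid)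
    also have "\<dots> = (\<Sum>p\<in>P. \<Sum>q\<in>P. u p * X p q * cnj (u q))"
      unfolding P_def Z_def by (simp add: sum_prod_split)
    finally have eq: "cinner y (choi F y) = complex_of_real (real CARD('n)) * (\<Sum>p\<in>P. \<Sum>q\<in>P. u p * X p q * cnj (u q))"
      unfolding d_def by simp
    have "0 \<le> cinner y (choi F y)" using cpos by blast
    then have "0 \<le> complex_of_real (real CARD('n)) * (\<Sum>p\<in>P. \<Sum>q\<in>P. u p * X p q * cnj (u q))"
      unfolding eq .
    then show "0 \<le> (\<Sum>p\<in>P. \<Sum>q\<in>P. u p * X p q * cnj (u q))"
      by (rule complex_nonneg_scale) simp
  qed
  show "0 \<le> (\<Sum>i<k. \<Sum>j<k. cinner (h i) (F (M i j) (h j)))"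
    unfolding pair by (rule psd_pairing[OF finP psdN Xcond])
qed


lemma choi_quad:
  fixes F :: "complex^'n^'n \<Rightarrow> 'a::complex_hilbert \<Rightarrow> 'a"
  shows "cinner y (choi F y) = complex_of_nat CARD('n) *
     (\<Sum>a\<in>UNIV. \<Sum>b\<in>UNIV. cinner (y $ a) (F (ket_bra a b) (y $ b)))"
  unfolding choi_def by (simp add: cinner_vec_sum cinner_scaleC_right cinner_sum_right sum_distrib_left)

lemma if10_mult: "(if P then 1 else 0) * (z::complex) = (if P then z else 0)"
  by simp

lemma ket_bra_mult: "(ket_bra a b *v x) $ c = (if c = a then x $ b else 0)"
  by (cases "c = a") (simp_all add: matrix_vector_mult_def if10_mult)

lemma cinner_ket_bra: "cinner (w::complex^'n) (ket_bra a b *v x) = cnj (w $ a) * x $ b"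
  by (simp add: cinner_vec_sum ket_bra_mult if_distrib cong: if_cong)

lemma cnj_mult_self_nonneg: "0 \<le> cnj z * (z::complex)"
  by (simp add: less_eq_complex_def)

lemma cp_choi_pos:
  fixes F :: "complex^'n^'n \<Rightarrow> 'a::complex_hilbert \<Rightarrow> 'a"
  assumes cp: "completely_positive F"
  shows "0 \<le> cinner y (choi F y)"
proof -
  define d where "d = CARD('n)"
  obtain \<sigma> where \<sigma>: "bij_betw \<sigma> {0..<d} (UNIV :: 'n set)"
    using ex_bij_betw_nat_finite[of "UNIV :: 'n set"] unfolding d_def by auto
  have \<sigma>': "bij_betw \<sigma> {..<d} (UNIV :: 'n set)" using \<sigma> by (simp add: atLeast0LessThan)
  define M where "M i j = ket_bra (\<sigma> i) (\<sigma> j)" for i j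
  have Mpos: "\<forall>v :: nat \<Rightarrow> complex^'n. 0 \<le> (\<Sum>i<d. \<Sum>j<d. cinner (v i) (M i j *v v j))"
  proof
    fix v :: "nat \<Rightarrow> complex^'n"
    have "(\<Sum>i<d. \<Sum>j<d. cinner (v i) (M i j *v v j)) = (\<Sum>i<d. \<Sum>j<d. cnj (v i $ \<sigma> i) * v j $ \<sigma> j)"
      unfolding M_def
      by (simp add: cinner_ket_bra)
    also have "\<dots> = cnj (\<Sum>i<d. v i $ \<sigma> i) * (\<Sum>j<d. v j $ \<sigma> j)"
      by (simp add: sum_product)
    finally show "0 \<le> (\<Sum>i<d. \<Sum>j<d. cinner (v i) (M i j *v v j))"
      using cnj_mult_self_nonneg[of "\<Sum>i<d. v i $ \<sigma> i"] by (simp only: cnj_sum)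
  qed
  have cpd: "(\<forall>v :: nat \<Rightarrow> complex^'n. 0 \<le> (\<Sum>i<d. \<Sum>j<d. cinner (v i) (M i j *v v j))) \<longrightarrow>
      (\<forall>h :: nat \<Rightarrow> 'a. 0 \<le> (\<Sum>i<d. \<Sum>j<d. cinner (h i) (F (M i j) (h j))))"
    using cp[unfolded completely_positive_def, THEN spec[of _ d], THEN spec[of _ M]] .
  have "\<forall>h :: nat \<Rightarrow> 'a. 0 \<le> (\<Sum>i<d. \<Sum>j<d. cinner (h i) (F (M i j) (h j)))"
    using cpd Mpos by (rule mp)
  then have "0 \<le> (\<Sum>i<d. \<Sum>j<d. cinner (y $ \<sigma> i) (F (M i j) (y $ \<sigma> j)))"
    by (rule spec)
  also have "(\<Sum>i<d. \<Sum>j<d. cinner (y $ \<sigma> i) (F (M i j) (y $ \<sigma> j))) =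
      (\<Sum>a\<in>UNIV. \<Sum>b\<in>UNIV. cinner (y $ a) (F (ket_bra a b) (y $ b)))"
  proof -
    have "(\<Sum>i<d. \<Sum>j<d. cinner (y $ \<sigma> i) (F (M i j) (y $ \<sigma> j))) =
        (\<Sum>i<d. \<Sum>b\<in>UNIV. cinner (y $ \<sigma> i) (F (ket_bra (\<sigma> i) b) (y $ b)))"
      unfolding M_def by (rule sum.cong[OF refl], rule sum.reindex_bij_betw[OF \<sigma>'])
    also have "\<dots> = (\<Sum>a\<in>UNIV. \<Sum>b\<in>UNIV. cinner (y $ a) (F (ket_bra a b) (y $ b)))"
      by (rule sum.reindex_bij_betw[OF \<sigma>'])
    finally show ?thesis .
  qed
  finally have "0 \<le> (\<Sum>a\<in>UNIV. \<Sum>b\<in>UNIV. cinner (y $ a) (F (ket_bra a b) (y $ b)))" .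
  then have "0 \<le> complex_of_nat CARD('n) * (\<Sum>a\<in>UNIV. \<Sum>b\<in>UNIV. cinner (y $ a) (F (ket_bra a b) (y $ b)))"
    by (simp add: less_eq_complex_def)
  then show ?thesis unfolding choi_quad .
qed


lemma scaleC_eq_0_imp:
  fixes v :: "'b::complex_hilbert"
  assumes "a *\<^sub>C v = 0" "a \<noteq> 0"
  shows "v = 0"
proof -
  have "v = (inverse a * a) *\<^sub>C v" using assms(2) by (simp add: scaleC_one)
  also have "\<dots> = inverse a *\<^sub>C (a *\<^sub>C v)" by (simp add: scaleC_scaleC)
  finally show ?thesis using assms(1) by simp
qed

lemma Re_cinner_swap: "Re (cinner y x) = Re (cinner x y)"
  by (subst cinner_commute) simp

lemma coercive_inj:
  fixes T :: "'b::complex_hilbert \<Rightarrow> 'b"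
  assumes bl: "bounded_linear T" and c: "c > 0"
    and co: "\<forall>x. c * (norm x)\<^sup>2 \<le> Re (cinner x (T x))"
    and eq: "T x = T z"
  shows "x = z"
proof -
  have "T (x - z) = 0" using eq linear_diff[OF bounded_linear.linear[OF bl]] by simp
  then have "c * (norm (x - z))\<^sup>2 \<le> 0" using co[rule_format, of "x - z"] by simp
  then have "norm (x - z) = 0" using c by (simp add: mult_le_0_iff)
  then show ?thesis by simp
qed

lemma coercive_surj:
  fixes T :: "'b::complex_hilbert \<Rightarrow> 'b"
  assumes bl: "bounded_linear T" and c: "c > 0"
    and co: "\<forall>x. c * (norm x)\<^sup>2 \<le> Re (cinner x (T x))"
  shows "\<exists>x. T x = y"
proof -
  obtain K0 where K0: "K0 > 0" "\<forall>x. norm (T x) \<le> norm x * K0"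
    using bounded_linear.pos_bounded[OF bl] by blast
  define K where "K = K0 + c"
  have Kc: "c < K" and Kpos: "K > 0" using K0 c unfolding K_def by auto
  have TK: "norm (T x) \<le> norm x * K" for x
  proof -
    have "norm (T x) \<le> norm x * K0" using K0 by blast
    also have "\<dots> \<le> norm x * K" unfolding K_def using c by (simp add: mult_left_mono)
    finally show ?thesis .
  qed
  define \<epsilon> where "\<epsilon> = c / K\<^sup>2"
  define q where "q = 1 - c\<^sup>2 / K\<^sup>2"
  have epos: "\<epsilon> > 0" unfolding \<epsilon>_def using c Kpos by simp
  have cK2: "c\<^sup>2 < K\<^sup>2" using Kc c by (simp add: power_strict_mono)
  have q0: "0 \<le> q" and q1: "q < 1" unfolding q_def using cK2 c Kpos Kc by (auto simp: field_simps)
  have lin: "linear T" using bl by (rule bounded_linear.linear)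
  have contr: "norm (w - complex_of_real \<epsilon> *\<^sub>C T w) \<le> sqrt q * norm w" for w
  proof -
    have "(norm (w - complex_of_real \<epsilon> *\<^sub>C T w))\<^sup>2 =
       Re (cinner (w - complex_of_real \<epsilon> *\<^sub>C T w) (w - complex_of_real \<epsilon> *\<^sub>C T w))"
      by (rule Re_cinner_self[symmetric])
    also have "\<dots> = Re (cinner w w) - 2 * \<epsilon> * Re (cinner w (T w)) + \<epsilon>\<^sup>2 * Re (cinner (T w) (T w))"
      by (simp add: cinner_diff_left cinner_diff_right
          cinner_scaleC_left cinner_scaleC_right Re_cinner_swap[of "T w" w] power2_eq_square algebra_simps)
    also have "\<dots> = (norm w)\<^sup>2 - 2 * \<epsilon> * Re (cinner w (T w)) + \<epsilon>\<^sup>2 * (norm (T w))\<^sup>2"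
      by (simp add: Re_cinner_self)
    also have "\<dots> \<le> (norm w)\<^sup>2 - 2 * \<epsilon> * (c * (norm w)\<^sup>2) + \<epsilon>\<^sup>2 * (norm w * K)\<^sup>2"
    proof -
      have "2 * \<epsilon> * (c * (norm w)\<^sup>2) \<le> 2 * \<epsilon> * Re (cinner w (T w))"
        using co epos by (simp add: mult_left_mono)
      moreover have "(norm (T w))\<^sup>2 \<le> (norm w * K)\<^sup>2"
        using TK[of w] by (simp add: power_mono)
      then have "\<epsilon>\<^sup>2 * (norm (T w))\<^sup>2 \<le> \<epsilon>\<^sup>2 * (norm w * K)\<^sup>2"
        by (simp add: mult_left_mono)
      ultimately show ?thesis by linarith
    qed
    also have "\<dots> = q * (norm w)\<^sup>2"
      unfolding \<epsilon>_def q_def using Kpos by (simp add: field_simps power2_eq_square)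
    also have "\<dots> = (sqrt q * norm w)\<^sup>2" using q0 by (simp add: power_mult_distrib)
    finally show ?thesis
      by (rule power2_le_imp_le) (use q0 in simp)
  qed
  define \<Phi> where "\<Phi> x = x + complex_of_real \<epsilon> *\<^sub>C (y - T x)" for x
  have "\<forall>x z. dist (\<Phi> x) (\<Phi> z) \<le> sqrt q * dist x z"
  proof (intro allI)
    fix x z
    have "\<Phi> x - \<Phi> z = (x - z) - complex_of_real \<epsilon> *\<^sub>C T (x - z)"
      unfolding \<Phi>_def by (simp add: linear_diff[OF lin] scaleC_diff_right algebra_simps)
    then show "dist (\<Phi> x) (\<Phi> z) \<le> sqrt q * dist x z"
      using contr[of "x - z"] by (simp add: dist_norm)
  qed
  moreover have "sqrt q < 1" using q1 q0 by simp
  ultimately obtain x where "\<Phi> x = x"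
    using banach_fix_type[of "sqrt q" \<Phi>] q0 by auto
  then have "complex_of_real \<epsilon> *\<^sub>C (y - T x) = 0" unfolding \<Phi>_def by simp
  then have "y - T x = 0" by (rule scaleC_eq_0_imp) (use epos in simp)
  then show ?thesis by auto
qed


lemma coercive_not_spec:
  fixes T :: "'b::complex_hilbert \<Rightarrow> 'b"
  assumes bop: "bounded_op T" and c: "c > 0"
    and co: "\<forall>x. c * (norm x)\<^sup>2 \<le> Re (cinner x (T x))"
  shows "0 \<notin> op_spectrum T"
proof -
  have bl: "bounded_linear T" and hom: "\<And>a x. T (a *\<^sub>C x) = a *\<^sub>C T x"
    using bop by (auto simp: bounded_op_def)
  have lin: "linear T" using bl by (rule bounded_linear.linear)
  have inj: "\<And>x z. T x = T z \<Longrightarrow> x = z" using coercive_inj[OF bl c co] by blast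
  define S where "S y = (THE x. T x = y)" for y
  have TS: "T (S y) = y" for y
  proof -
    obtain x where "T x = y" using coercive_surj[OF bl c co] by blast
    then have "\<exists>!x. T x = y" using inj by blast
    then show ?thesis unfolding S_def by (rule theI')
  qed
  have ST: "S (T x) = x" for x using TS[of "T x"] inj by blast
  have Sadd: "S (a + b) = S a + S b" for a b
    by (rule inj) (simp add: TS linear_add[OF lin])
  have SC: "S (a *\<^sub>C b) = a *\<^sub>C S b" for a b
    by (rule inj) (simp add: TS hom)
  have SR: "S (r *\<^sub>R b) = r *\<^sub>R S b" for r b
    using SC[of "complex_of_real r" b] by (simp add: scaleC_of_real)
  have Sbound: "norm (S y) \<le> norm y * (1 / c)" for y
  proof -
    have "c * (norm (S y))\<^sup>2 \<le> Re (cinner (S y) y)" using co[rule_format, of "S y"] by (simp add: TS)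
    also have "\<dots> \<le> norm (S y) * norm y" by (rule Re_cinner_le)
    finally have h: "c * (norm (S y))\<^sup>2 \<le> norm (S y) * norm y" .
    show ?thesis
    proof (cases "norm (S y) = 0")
      case True then show ?thesis using c by simp
    next
      case False
      then have "norm (S y) > 0" by simp
      then have "c * norm (S y) \<le> norm y" using h by (simp add: power2_eq_square)
      then show ?thesis using c by (simp add: field_simps)
    qed
  qed
  have "bounded_op S"
    unfolding bounded_op_def
  proof
    show "bounded_linear S"
      by (rule bounded_linear_intro[where K="1/c"]) (auto simp: Sadd SR Sbound simp del: times_divide_eq_right divide_inverse)
    show "\<forall>a x. S (a *\<^sub>C x) = a *\<^sub>C S x" using SC by blast
  qed
  then show ?thesis unfolding op_spectrum_def using ST TS by auto
qed

lemma herm_of_pos: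
  fixes T :: "'b::complex_hilbert \<Rightarrow> 'b"
  assumes bop: "bounded_op T" and pos: "\<forall>x. 0 \<le> cinner x (T x)"
  shows "cinner y (T x) = cnj (cinner x (T y))"
proof -
  have bl: "bounded_linear T" and hom: "\<And>a x. T (a *\<^sub>C x) = a *\<^sub>C T x"
    using bop by (auto simp: bounded_op_def)
  have lin: "linear T" using bl by (rule bounded_linear.linear)
  have im0: "Im (cinner z (T z)) = 0" for z using pos by (auto simp: less_eq_complex_def)
  have e1: "cinner (x + y) (T (x + y)) = cinner x (T x) + cinner x (T y) + cinner y (T x) + cinner y (T y)"
    by (simp add: linear_add[OF lin] cinner_add_left cinner_add_right)
  have e2: "cinner (x + \<i> *\<^sub>C y) (T (x + \<i> *\<^sub>C y)) =
      cinner x (T x) + \<i> * cinner x (T y) - \<i> * cinner y (T x) + cinner y (T y)"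
    by (simp add: linear_add[OF lin] hom cinner_add_left cinner_add_right cinner_scaleC_left
        cinner_scaleC_right algebra_simps)
  have a: "Im (cinner x (T y)) + Im (cinner y (T x)) = 0"
    using im0[of "x + y"] im0[of x] im0[of y] unfolding e1 by simp
  have b: "Re (cinner x (T y)) - Re (cinner y (T x)) = 0"
    using im0[of "x + \<i> *\<^sub>C y"] im0[of x] im0[of y] unfolding e2 by simp
  show ?thesis using a b by (simp add: complex_eq_iff)
qed

lemma coercive_of_inv:
  fixes T :: "'b::complex_hilbert \<Rightarrow> 'b"
  assumes bop: "bounded_op T" and pos: "\<forall>x. 0 \<le> cinner x (T x)"
    and ns: "0 \<notin> op_spectrum T"
  shows "\<exists>c>0. \<forall>x. c * (norm x)\<^sup>2 \<le> Re (cinner x (T x))"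
proof -
  have bl: "bounded_linear T" and hom: "\<And>a x. T (a *\<^sub>C x) = a *\<^sub>C T x"
    using bop by (auto simp: bounded_op_def)
  have lin: "linear T" using bl by (rule bounded_linear.linear)
  obtain S where Sb: "bounded_op S" and ST: "\<And>x. S (T x) = x"
    using ns unfolding op_spectrum_def by auto
  obtain KS where KS: "KS > 0" "\<forall>x. norm (S x) \<le> norm x * KS"
    using bounded_linear.pos_bounded[of S] Sb by (auto simp: bounded_op_def)
  obtain K where K: "K > 0" "\<forall>x. norm (T x) \<le> norm x * K"
    using bounded_linear.pos_bounded[OF bl] by blast
  have key: "(norm (T x))\<^sup>2 / K \<le> Re (cinner x (T x))" for x
  proof -
    define s where "s = 1 / K"
    define n where "n = (norm (T x))\<^sup>2"
    have h1: "cinner x (T (T x)) = complex_of_real n"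
      using herm_of_pos[OF bop pos, of x "T x"] by (simp add: cinner_self n_def)
    have h2: "cinner (T x) (T x) = complex_of_real n" by (simp add: cinner_self n_def)
    have h3: "Re (cinner (T x) (T (T x))) \<le> K * n"
    proof -
      have "Re (cinner (T x) (T (T x))) \<le> norm (T x) * norm (T (T x))" by (rule Re_cinner_le)
      also have "\<dots> \<le> norm (T x) * (norm (T x) * K)" using K by (simp add: mult_left_mono)
      finally show ?thesis by (simp add: n_def power2_eq_square algebra_simps)
    qed
    have "0 \<le> Re (cinner (x - complex_of_real s *\<^sub>C T x) (T (x - complex_of_real s *\<^sub>C T x)))"
      using pos by (simp add: less_eq_complex_def)
    also have "\<dots> = Re (cinner x (T x)) - 2 * s * n + s\<^sup>2 * Re (cinner (T x) (T (T x)))"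
      by (simp add: linear_diff[OF lin] hom cinner_diff_left cinner_diff_right cinner_scaleC_left
          cinner_scaleC_right h1 h2 power2_eq_square algebra_simps)
    also have "\<dots> \<le> Re (cinner x (T x)) - 2 * s * n + s\<^sup>2 * (K * n)"
      using h3 by (simp add: mult_left_mono)
    also have "\<dots> = Re (cinner x (T x)) - n / K"
      unfolding s_def using K by (simp add: field_simps power2_eq_square)
    finally show ?thesis unfolding n_def by simp
  qed
  define c where "c = 1 / (K * KS\<^sup>2)"
  have cpos: "c > 0" unfolding c_def using K KS by simp
  have "c * (norm x)\<^sup>2 \<le> Re (cinner x (T x))" for x
  proof -
    have "norm x \<le> norm (T x) * KS" using KS ST[of x] by metis
    then have "(norm x)\<^sup>2 \<le> (norm (T x) * KS)\<^sup>2" by (simp add: power_mono)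
    then have "(norm x)\<^sup>2 / KS\<^sup>2 \<le> (norm (T x))\<^sup>2"
      using KS by (simp add: field_simps power_mult_distrib)
    then have "c * (norm x)\<^sup>2 \<le> (norm (T x))\<^sup>2 / K"
      unfolding c_def using K KS by (simp add: field_simps)
    also have "\<dots> \<le> Re (cinner x (T x))" by (rule key)
    finally show ?thesis .
  qed
  then show ?thesis using cpos by blast
qed


definition comb :: "complex \<Rightarrow> complex \<Rightarrow> (complex^'n^'n \<Rightarrow> 'a::complex_hilbert \<Rightarrow> 'a)
   \<Rightarrow> (complex^'n^'n \<Rightarrow> 'a \<Rightarrow> 'a) \<Rightarrow> (complex^'n^'n \<Rightarrow> 'a \<Rightarrow> 'a)" where
  "comb a b F G = (\<lambda>A x. a *\<^sub>C F A x + b *\<^sub>C G A x)"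

lemma chan_comb_comb: "chan_comb t F G = comb (complex_of_real t) (complex_of_real (1 - t)) F G"
  by (simp add: chan_comb_def comb_def)

lemma bop_comb:
  fixes S T :: "'b::complex_hilbert \<Rightarrow> 'b"
  assumes "bounded_op S" "bounded_op T"
  shows "bounded_op (\<lambda>x. a *\<^sub>C S x + b *\<^sub>C T x)"
proof -
  have blS: "bounded_linear S" and blT: "bounded_linear T"
    using assms by (auto simp: bounded_op_def)
  have "bounded_linear (\<lambda>x. a *\<^sub>C S x + b *\<^sub>C T x)"
    by (intro bounded_linear_add bounded_linear_compose[OF bounded_linear_scaleC] blS blT)
  moreover have "(a *\<^sub>C S (c *\<^sub>C x) + b *\<^sub>C T (c *\<^sub>C x)) = c *\<^sub>C (a *\<^sub>C S x + b *\<^sub>C T x)" for c x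
    using assms by (simp add: bounded_op_def scaleC_scaleC scaleC_add_right mult.commute)
  ultimately show ?thesis by (simp add: bounded_op_def)
qed

lemma lin_comb:
  fixes F G :: "complex^'n^'n \<Rightarrow> 'a::complex_hilbert \<Rightarrow> 'a"
  assumes "lin F" "lin G"
  shows "lin (comb a b F G)"
  unfolding lin_def
proof (intro conjI allI)
  fix A B :: "complex^'n^'n"
  show "comb a b F G (A + B) = (\<lambda>x. comb a b F G A x + comb a b F G B x)"
    using assms by (simp add: lin_def comb_def scaleC_add_right fun_eq_iff algebra_simps)
next
  fix c and A :: "complex^'n^'n"
  show "comb a b F G (c *\<^sub>C A) = (\<lambda>x. c *\<^sub>C comb a b F G A x)"
    using assms by (simp add: lin_def comb_def scaleC_add_right scaleC_scaleC fun_eq_iff mult.commute)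
next
  fix A :: "complex^'n^'n"
  show "bounded_op (comb a b F G A)"
    unfolding comb_def using assms by (intro bop_comb) (auto simp: lin_def)
qed

lemma choi_comb:
  fixes F G :: "complex^'n^'n \<Rightarrow> 'a::complex_hilbert \<Rightarrow> 'a"
  shows "cinner y (choi (comb a b F G) y) = a * cinner y (choi F y) + b * cinner y (choi G y)"
  unfolding choi_quad comb_def
  by (simp add: cinner_add_right cinner_scaleC_right sum.distrib sum_distrib_left algebra_simps)

lemma channel_lin: "F \<in> channels \<Longrightarrow> lin F"
  by (simp add: channels_def lin_def)

lemma bop_choi:
  fixes F :: "complex^'n^'n \<Rightarrow> 'a::complex_hilbert \<Rightarrow> 'a"
  assumes "lin F"
  shows "bounded_op (choi F)"
proof -
  have bop: "\<And>A. bounded_op (F A)" using assms by (simp add: lin_def)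
  have bl: "\<And>A. bounded_linear (F A)" using bop by (simp add: bounded_op_def)
  have comp: "bounded_linear (\<lambda>x::'a^'n. complex_of_nat CARD('n) *\<^sub>C (\<Sum>n\<in>UNIV. F (ket_bra m n) (x $ n)))" for m
    by (intro bounded_linear_compose[OF bounded_linear_scaleC] bounded_linear_sum
        bounded_linear_compose[OF bl] bounded_linear_vec_nth)
  have "\<forall>m. \<exists>K. \<forall>x::'a^'n. norm (complex_of_nat CARD('n) *\<^sub>C (\<Sum>n\<in>UNIV. F (ket_bra m n) (x $ n))) \<le> norm x * K"
    using comp bounded_linear.bounded by blast
  then obtain K where K: "\<And>m x. norm (complex_of_nat CARD('n) *\<^sub>C (\<Sum>n\<in>UNIV. F (ket_bra m n) (x $ n))) \<le> norm x * K m"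
    by metis
  have "bounded_linear (choi F)"
  proof (rule bounded_linear_intro[where K="\<Sum>m\<in>UNIV. K m"])
    fix x y :: "'a^'n" and r :: real
    show "choi F (x + y) = choi F x + choi F y"
      unfolding choi_def using linear_add[OF bounded_linear.linear[OF comp]]
      by (simp add: vec_eq_iff)
    show "choi F (r *\<^sub>R x) = r *\<^sub>R choi F x"
      unfolding choi_def using linear_scale[OF bounded_linear.linear[OF comp]]
      by (simp add: vec_eq_iff)
  next
    fix x :: "'a^'n"
    have "norm (choi F x) \<le> (\<Sum>m\<in>UNIV. norm (choi F x $ m))"
      unfolding norm_vec_def by (rule L2_set_le_sum) simp
    also have "\<dots> \<le> (\<Sum>m\<in>UNIV. norm x * K m)"
      by (rule sum_mono) (simp add: choi_def K)
    also have "\<dots> = norm x * (\<Sum>m\<in>UNIV. K m)" by (simp add: sum_distrib_left)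
    finally show "norm (choi F x) \<le> norm x * (\<Sum>m\<in>UNIV. K m)" .
  qed
  moreover have "choi F (c *\<^sub>C x) = c *\<^sub>C choi F x" for c x
    unfolding choi_def
    by (simp add: vec_eq_iff bop_scaleC[OF bop] scaleC_sum_right scaleC_scaleC mult.commute)
  ultimately show ?thesis by (simp add: bounded_op_def)
qed


definition depol :: "complex^'n^'n \<Rightarrow> 'a::complex_hilbert \<Rightarrow> 'a" where
  "depol A x = ((\<Sum>a\<in>UNIV. A$a$a) / complex_of_nat CARD('n)) *\<^sub>C x"

lemma bop_scaleC_const: "bounded_op (\<lambda>x::'b::complex_hilbert. k *\<^sub>C x)"
  unfolding bounded_op_def using bounded_linear_scaleC[of k]
  by (simp add: scaleC_scaleC mult.commute)

lemma lin_depol: "lin (depol :: complex^'n^'n \<Rightarrow> 'a::complex_hilbert \<Rightarrow> 'a)"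
  unfolding lin_def
proof (intro conjI allI)
  fix A B :: "complex^'n^'n"
  show "(depol (A + B) :: 'a \<Rightarrow> 'a) = (\<lambda>x. depol A x + depol B x)"
    by (simp add: depol_def fun_eq_iff sum.distrib add_divide_distrib scaleC_add_left)
next
  fix c and A :: "complex^'n^'n"
  have "(\<Sum>a\<in>UNIV. (c *\<^sub>C A) $ a $ a) = c * (\<Sum>a\<in>UNIV. A $ a $ a)"
    by (simp add: sum_distrib_left)
  then show "(depol (c *\<^sub>C A) :: 'a \<Rightarrow> 'a) = (\<lambda>x. c *\<^sub>C depol A x)"
    by (simp add: depol_def fun_eq_iff scaleC_scaleC)
next
  fix A :: "complex^'n^'n"
  show "bounded_op (depol A :: 'a \<Rightarrow> 'a)"
    unfolding depol_def by (rule bop_scaleC_const)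
qed

lemma trace_ket_bra: "(\<Sum>a\<in>UNIV. ket_bra m n $ a $ a) = (if m = n then 1 else (0::complex))"
  by (cases "m = n") (auto intro: sum.neutral)

lemma choi_depol: "choi (depol :: complex^'n^'n \<Rightarrow> 'a::complex_hilbert \<Rightarrow> 'a) y = y"
proof -
  have "choi (depol :: complex^'n^'n \<Rightarrow> 'a \<Rightarrow> 'a) y $ m = y $ m" for m
  proof -
    have "choi (depol :: complex^'n^'n \<Rightarrow> 'a \<Rightarrow> 'a) y $ m =
        complex_of_nat CARD('n) *\<^sub>C (\<Sum>n\<in>UNIV. ((if m = n then 1 else 0) / complex_of_nat CARD('n)) *\<^sub>C y $ n)"
      unfolding choi_def depol_def by (simp del: ket_bra_nth add: trace_ket_bra)
    also have "(\<Sum>n\<in>UNIV. ((if m = n then 1 else 0) / complex_of_nat CARD('n)) *\<^sub>C y $ n) =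
        (\<Sum>n\<in>UNIV. if n = m then (1 / complex_of_nat CARD('n)) *\<^sub>C y $ n else 0)"
      by (rule sum.cong) auto
    also have "\<dots> = (1 / complex_of_nat CARD('n)) *\<^sub>C y $ m" by simp
    also have "complex_of_nat CARD('n) *\<^sub>C ((1 / complex_of_nat CARD('n)) *\<^sub>C y $ m) = y $ m"
      by (simp add: scaleC_scaleC scaleC_one)
    finally show ?thesis .
  qed
  then show ?thesis by (simp add: vec_eq_iff)
qed

lemma depol_channel: "(depol :: complex^'n^'n \<Rightarrow> 'a::complex_hilbert \<Rightarrow> 'a) \<in> channels"
proof -
  have l: "lin (depol :: complex^'n^'n \<Rightarrow> 'a \<Rightarrow> 'a)" by (rule lin_depol)
  have u: "(depol (mat 1) :: 'a \<Rightarrow> 'a) = (\<lambda>x. x)"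
    by (simp add: depol_def mat_def fun_eq_iff scaleC_one)
  have cp: "completely_positive (depol :: complex^'n^'n \<Rightarrow> 'a \<Rightarrow> 'a)"
    by (rule choi_pos_cp[OF l]) (simp add: choi_depol cinner_self less_eq_complex_def)
  show ?thesis using l u cp unfolding channels_def lin_def by blast
qed


lemma cp_of_channel: "F \<in> channels \<Longrightarrow> completely_positive F"
  by (simp add: channels_def)

lemma real_of_nonneg: "0 \<le> (z::complex) \<Longrightarrow> z = complex_of_real (Re z)"
  by (simp add: less_eq_complex_def complex_eq_iff)

theorem proposition14:
  fixes F :: "complex^'n^'n \<Rightarrow> 'a::complex_hilbert \<Rightarrow> 'a"
  assumes "separable_space (euclidean :: 'a topology)"
    and "F \<in> channels"
  shows "F \<in> conv_boundary channels \<longleftrightarrow> 0 \<in> op_spectrum (choi F)"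
proof -
  have chF: "F \<in> channels" by fact
  have linF: "lin F" using chF by (rule channel_lin)
  have bopE: "bounded_op (choi F)" using linF by (rule bop_choi)
  have posF: "\<forall>y. 0 \<le> cinner y (choi F y)"
    using cp_choi_pos[OF cp_of_channel[OF chF]] by blast
  show ?thesis
  proof
    assume bd: "F \<in> conv_boundary channels"
    show "0 \<in> op_spectrum (choi F)"
    proof (rule ccontr)
      assume ns: "0 \<notin> op_spectrum (choi F)"
      obtain c where c: "c > 0" "\<forall>y. c * (norm y)\<^sup>2 \<le> Re (cinner y (choi F y))"
        using coercive_of_inv[OF bopE posF ns] by blast
      obtain G where chG: "G \<in> channels" and nle: "\<not> conv_le channels G F"
        using bd unfolding conv_boundary_def by blast
      have linG: "lin G" using chG by (rule channel_lin)
      have posG: "\<forall>y. 0 \<le> cinner y (choi G y)"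
        using cp_choi_pos[OF cp_of_channel[OF chG]] by blast
      obtain KG where KG: "KG > 0" "\<forall>y. norm (choi G y) \<le> norm y * KG"
        using bounded_linear.pos_bounded[of "choi G"] bop_choi[OF linG]
        by (auto simp: bounded_op_def)
      define t where "t = min (1/2) (c / KG)"
      have t0: "t > 0" and t1: "t \<le> 1/2" and tK: "t * KG \<le> c"
        unfolding t_def using c KG by (auto simp: min_def field_simps)
      define \<alpha> where "\<alpha> = complex_of_real (1 / (1 - t))"
      define \<beta> where "\<beta> = complex_of_real (- t / (1 - t))"
      define Z where "Z = comb \<alpha> \<beta> F G"
      have linZ: "lin Z" unfolding Z_def by (rule lin_comb[OF linF linG])
      have unF: "F (mat 1) = (\<lambda>x. x)" using chF by (simp add: channels_def)
      have unG: "G (mat 1) = (\<lambda>x. x)" using chG by (simp add: channels_def)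
      have ab: "\<alpha> + \<beta> = 1" unfolding \<alpha>_def \<beta>_def using t1
        by (simp add: field_simps of_real_add[symmetric] del: of_real_add)
      have unZ: "Z (mat 1) = (\<lambda>x. x)"
        unfolding Z_def comb_def unF unG
        by (simp add: fun_eq_iff scaleC_add_left[symmetric] ab scaleC_one)
      have posZ: "\<forall>y. 0 \<le> cinner y (choi Z y)"
      proof
        fix y
        define qF where "qF = Re (cinner y (choi F y))"
        define qG where "qG = Re (cinner y (choi G y))"
        have eF: "cinner y (choi F y) = complex_of_real qF"
          unfolding qF_def using real_of_nonneg posF by blast
        have eG: "cinner y (choi G y) = complex_of_real qG"
          unfolding qG_def using real_of_nonneg posG by blast
        have "qG \<le> norm y * norm (choi G y)" unfolding qG_def by (rule Re_cinner_le)
        also have "\<dots> \<le> norm y * (norm y * KG)" using KG by (simp add: mult_left_mono)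
        finally have "t * qG \<le> t * (KG * (norm y)\<^sup>2)" using t0
          by (simp add: power2_eq_square algebra_simps mult_left_mono)
        also have "\<dots> \<le> c * (norm y)\<^sup>2" using tK by (simp add: mult_right_mono mult.assoc[symmetric])
        also have "\<dots> \<le> qF" using c unfolding qF_def by blast
        finally have key: "0 \<le> (qF - t * qG) / (1 - t)" using t1 by simp
        have r: "1 / (1 - t) * qF + (- t / (1 - t)) * qG = (qF - t * qG) / (1 - t)"
        proof -
          have ne: "1 - t \<noteq> 0" using t1 by simp
          show ?thesis using ne by (simp add: diff_divide_distrib)
        qed
        have "cinner y (choi Z y) = complex_of_real (1 / (1 - t) * qF + (- t / (1 - t)) * qG)"
          unfolding Z_def choi_comb eF eG \<alpha>_def \<beta>_def by simp
        then have "cinner y (choi Z y) = complex_of_real ((qF - t * qG) / (1 - t))"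
          unfolding r .
        then show "0 \<le> cinner y (choi Z y)" using key by (simp add: less_eq_complex_def)
      qed
      have cpZ: "completely_positive Z" by (rule choi_pos_cp[OF linZ posZ])
      have chZ: "Z \<in> channels"
        using linZ unZ cpZ unfolding channels_def lin_def by blast
      have "F = chan_comb t G Z"
      proof (rule ext, rule ext)
        fix A x
        have s1: "complex_of_real (1 - t) * \<alpha> = 1" unfolding \<alpha>_def using t1
          by (simp add: of_real_mult[symmetric] del: of_real_mult)
        have s2: "complex_of_real (1 - t) * \<beta> = - complex_of_real t" unfolding \<beta>_def using t1
          by (simp add: of_real_mult[symmetric] del: of_real_mult)
        have "chan_comb t G Z A x =
            complex_of_real t *\<^sub>C G A x + (complex_of_real (1 - t) * \<alpha>) *\<^sub>C F A x
              + (complex_of_real (1 - t) * \<beta>) *\<^sub>C G A x"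
          unfolding chan_comb_def Z_def comb_def by (simp add: scaleC_add_right scaleC_scaleC add.assoc)
        also have "\<dots> = F A x + (complex_of_real t + - complex_of_real t) *\<^sub>C G A x"
          unfolding s1 s2 by (simp add: scaleC_add_left scaleC_one scaleC_minus_left algebra_simps)
        also have "\<dots> = F A x" by (simp only: add.right_inverse scaleC_zero_left add_0_right)
        finally show "F A x = chan_comb t G Z A x" by simp
      qed
      then have "conv_le channels G F"
        unfolding conv_le_def
      proof (intro bexI[of _ Z] exI[of _ t] conjI)
        show "t \<le> 1" using t1 by simp
      qed (use chZ t0 in auto)
      then show False using nle by contradiction
    qed
  next
    assume sp: "0 \<in> op_spectrum (choi F)"
    have "\<not> conv_le channels (depol :: complex^'n^'n \<Rightarrow> 'a \<Rightarrow> 'a) F"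
    proof
      assume "conv_le channels (depol :: complex^'n^'n \<Rightarrow> 'a \<Rightarrow> 'a) F"
      then obtain Z t where chZ: "Z \<in> channels" and t: "0 < t" "t \<le> 1" and
          Fe: "F = chan_comb t (depol :: complex^'n^'n \<Rightarrow> 'a \<Rightarrow> 'a) Z"
        unfolding conv_le_def by blast
      have posZ: "\<forall>y. 0 \<le> cinner y (choi Z y)"
        using cp_choi_pos[OF cp_of_channel[OF chZ]] by blast
      have "\<forall>y. t * (norm y)\<^sup>2 \<le> Re (cinner y (choi F y))"
      proof
        fix y
        have "cinner y (choi F y) = complex_of_real t * cinner y y + complex_of_real (1 - t) * cinner y (choi Z y)"
          unfolding Fe chan_comb_comb choi_comb choi_depol ..
        then have "Re (cinner y (choi F y)) = t * (norm y)\<^sup>2 + (1 - t) * Re (cinner y (choi Z y))"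
          by (simp add: cinner_self)
        moreover have "0 \<le> (1 - t) * Re (cinner y (choi Z y))"
          using posZ t by (simp add: less_eq_complex_def)
        ultimately show "t * (norm y)\<^sup>2 \<le> Re (cinner y (choi F y))" by simp
      qed
      then have "0 \<notin> op_spectrum (choi F)" by (rule coercive_not_spec[OF bopE t(1)])
      then show False using sp by contradiction
    qed
    then show "F \<in> conv_boundary channels"
      unfolding conv_boundary_def using chF depol_channel by blast
  qed
qed


end
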